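(* Let $M_1$ and $M_2$ be smooth connected manifolds and $\Gamma\subset\mathrm{Diff}(M_1)\times\mathrm{Diff}(M_2)$ a group of diffeomorphisms of $M_1\times M_2$ that is of quotient type. Then $\Gamma$ is properly discontinuous.
   Context: A group $\Gamma$ of diffeomorphisms of a manifold $M$ is properly discontinuous if (PD1) each $p\in M$ has a neighbourhood $U$ with $\gamma(U)\cap U=\emptyset$ for all $\gamma\in\Gamma\setminus\{1\}$, and (PD2) any two points $p,q$ not in the same $\Gamma$-orbit have neighbourhoods $U_p,U_q$ with $\gamma(U_p)\cap U_q=\emptyset$ for all $\gamma\in\Gamma$. For $\Gamma\subset\mathrm{Diff}(M_1)\times\mathrm{Diff}(M_2)$ let $\Gamma_i$ be its projection to $\mathrm{Diff}(M_i)$ and, for $\sigma\in\Gamma_2$, $\Gamma_\sigma:=\{\gamma\in\Gamma_1:(\gamma,\sigma)\in\Gamma\}$. $\Gamma$ is of quotient type if (i) $\Gamma_2$ is properly discontinuous, (ii) $\Gamma_{\mathrm{Id}_{M_2}}\subset\Gamma_1$ satisfies (PD1), and (iii) $\Gamma_\sigma\subset\Gamma_1$ satisfies (PD2) (in the sense: points of $M_1$ not related by an element of $\Gamma_\sigma$ have neighbourhoods $U,V$ with $\gamma(U)\cap V=\emptyset$ for all $\gamma\in\Gamma_\sigma$) for all $\sigma\in\Gamma_2$; or if the same holds with the roles of $M_1$ and $M_2$ exchanged. *)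

theory Defs
  imports "HOL-Analysis.Analysis"
begin

(* A map is a self-homeomorphism of the whole space (stand-in for a diffeomorphism). *)
definition self_homeo :: "('a::topological_space \<Rightarrow> 'a) \<Rightarrow> bool" where
  "self_homeo f \<longleftrightarrow> (\<exists>g. homeomorphism UNIV UNIV f g)"

(* Topological manifold of dimension CARD('n): Hausdorff, second countable (type classes),
   and locally homeomorphic to open subsets of real^'n. *)
definition locally_euclidean :: "'a::topological_space itself \<Rightarrow> 'n::finite itself \<Rightarrow> bool" where
  "locally_euclidean _ _ \<longleftrightarrow>
     (\<forall>p::'a. \<exists>U (V::(real^'n) set). open U \<and> p \<in> U \<and> open V \<and> U homeomorphic V)"

definition PD1 :: "('a::topological_space \<Rightarrow> 'a) set \<Rightarrow> bool" where
  "PD1 G \<longleftrightarrow> (\<forall>p. \<exists>U. open U \<and> p \<in> U \<and> (\<forall>\<gamma>\<in>G. \<gamma> \<noteq> id \<longrightarrow> \<gamma> ` U \<inter> U = {}))"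

definition PD2 :: "('a::topological_space \<Rightarrow> 'a) set \<Rightarrow> bool" where
  "PD2 G \<longleftrightarrow> (\<forall>p q. (\<forall>\<gamma>\<in>G. \<gamma> p \<noteq> q) \<longrightarrow>
      (\<exists>U V. open U \<and> p \<in> U \<and> open V \<and> q \<in> V \<and> (\<forall>\<gamma>\<in>G. \<gamma> ` U \<inter> V = {})))"

definition properly_discontinuous :: "('a::topological_space \<Rightarrow> 'a) set \<Rightarrow> bool" where
  "properly_discontinuous G \<longleftrightarrow> PD1 G \<and> PD2 G"

definition product_homeo_group ::
  "(('a::topological_space \<Rightarrow> 'a) \<times> ('b::topological_space \<Rightarrow> 'b)) set \<Rightarrow> bool" where
  "product_homeo_group \<Gamma> \<longleftrightarrow>
     (\<forall>\<gamma>\<in>\<Gamma>. self_homeo (fst \<gamma>) \<and> self_homeo (snd \<gamma>)) \<and>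
     (id, id) \<in> \<Gamma> \<and>
     (\<forall>a\<in>\<Gamma>. \<forall>b\<in>\<Gamma>. (fst a \<circ> fst b, snd a \<circ> snd b) \<in> \<Gamma>) \<and>
     (\<forall>a\<in>\<Gamma>. \<exists>b\<in>\<Gamma>. fst a \<circ> fst b = id \<and> fst b \<circ> fst a = id \<and>
                       snd a \<circ> snd b = id \<and> snd b \<circ> snd a = id)"

definition prod_action ::
  "(('a \<Rightarrow> 'a) \<times> ('b \<Rightarrow> 'b)) set \<Rightarrow> ('a \<times> 'b \<Rightarrow> 'a \<times> 'b) set" where
  "prod_action \<Gamma> = (\<lambda>\<gamma>. map_prod (fst \<gamma>) (snd \<gamma>)) ` \<Gamma>"

definition slice2 :: "(('a \<Rightarrow> 'a) \<times> ('b \<Rightarrow> 'b)) set \<Rightarrow> ('b \<Rightarrow> 'b) \<Rightarrow> ('a \<Rightarrow> 'a) set" where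
  "slice2 \<Gamma> \<sigma> = {\<gamma>. (\<gamma>, \<sigma>) \<in> \<Gamma>}"

definition slice1 :: "(('a \<Rightarrow> 'a) \<times> ('b \<Rightarrow> 'b)) set \<Rightarrow> ('a \<Rightarrow> 'a) \<Rightarrow> ('b \<Rightarrow> 'b) set" where
  "slice1 \<Gamma> \<sigma> = {\<gamma>. (\<sigma>, \<gamma>) \<in> \<Gamma>}"

definition of_quotient_type ::
  "(('a::topological_space \<Rightarrow> 'a) \<times> ('b::topological_space \<Rightarrow> 'b)) set \<Rightarrow> bool" where
  "of_quotient_type \<Gamma> \<longleftrightarrow>
     (properly_discontinuous (snd ` \<Gamma>) \<and> PD1 (slice2 \<Gamma> id) \<and>
        (\<forall>\<sigma>\<in>snd ` \<Gamma>. PD2 (slice2 \<Gamma> \<sigma>)))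
   \<or> (properly_discontinuous (fst ` \<Gamma>) \<and> PD1 (slice1 \<Gamma> id) \<and>
        (\<forall>\<sigma>\<in>fst ` \<Gamma>. PD2 (slice1 \<Gamma> \<sigma>)))"

end

theory Submission
  imports Defs
begin

lemma self_homeo_open:
  assumes "self_homeo f" "open W" shows "open (f ` W)"
proof -
  obtain g where h: "homeomorphism UNIV UNIV f g" using assms(1) unfolding self_homeo_def by blast
  have "openin (top_of_set UNIV) W" using assms(2) by simp
  from homeomorphism_imp_open_map[OF h this] show ?thesis by simp
qed

lemma map_prod_neq_id: "map_prod a b \<noteq> id \<Longrightarrow> a \<noteq> id \<or> b \<noteq> id"
  by auto

lemma allE2: "\<forall>p q. P p q \<longrightarrow> Q p q \<Longrightarrow> P a b \<Longrightarrow> Q a b" by blast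

lemma case1:
  fixes \<Gamma> :: "(('a::topological_space \<Rightarrow> 'a) \<times> ('b::topological_space \<Rightarrow> 'b)) set"
  assumes grp: "product_homeo_group \<Gamma>"
    and pd: "properly_discontinuous (snd ` \<Gamma>)"
    and p1: "PD1 (slice2 \<Gamma> id)"
    and p2: "\<forall>\<sigma>\<in>snd ` \<Gamma>. PD2 (slice2 \<Gamma> \<sigma>)"
  shows "properly_discontinuous (prod_action \<Gamma>)"
proof -
  have G1: "\<forall>\<gamma>\<in>\<Gamma>. self_homeo (fst \<gamma>) \<and> self_homeo (snd \<gamma>)"
    and G3: "\<forall>a\<in>\<Gamma>. \<forall>b\<in>\<Gamma>. (fst a \<circ> fst b, snd a \<circ> snd b) \<in> \<Gamma>"
    and G4: "\<forall>a\<in>\<Gamma>. \<exists>b\<in>\<Gamma>. fst a \<circ> fst b = id \<and> fst b \<circ> fst a = id \<and>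
                       snd a \<circ> snd b = id \<and> snd b \<circ> snd a = id"
    using grp unfolding product_homeo_group_def by blast+
  have pd1: "PD1 (snd ` \<Gamma>)" and pd2: "PD2 (snd ` \<Gamma>)"
    using pd unfolding properly_discontinuous_def by auto
  have A: "PD1 (prod_action \<Gamma>)"
    unfolding PD1_def
  proof
    fix x :: "'a \<times> 'b"
    obtain p q where x: "x = (p, q)" by (rule prod.exhaust)
    obtain U where U: "open U" "p \<in> U" "\<forall>\<gamma>\<in>slice2 \<Gamma> id. \<gamma> \<noteq> id \<longrightarrow> \<gamma> ` U \<inter> U = {}"
      using p1 unfolding PD1_def by blast
    obtain V where V: "open V" "q \<in> V" "\<forall>\<gamma>\<in>snd ` \<Gamma>. \<gamma> \<noteq> id \<longrightarrow> \<gamma> ` V \<inter> V = {}"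
      using pd1 unfolding PD1_def by blast
    show "\<exists>W. open W \<and> x \<in> W \<and> (\<forall>\<gamma>\<in>prod_action \<Gamma>. \<gamma> \<noteq> id \<longrightarrow> \<gamma> ` W \<inter> W = {})"
    proof (intro exI conjI ballI impI)
      show "open (U \<times> V)" using U V by (simp add: open_Times)
      show "x \<in> U \<times> V" using U V x by simp
      fix g assume g: "g \<in> prod_action \<Gamma>" "g \<noteq> id"
      then obtain a b where ab: "(a, b) \<in> \<Gamma>" "g = map_prod a b"
        unfolding prod_action_def by auto
      have "a \<noteq> id \<or> b \<noteq> id" using g ab map_prod_neq_id by blast
      then show "g ` (U \<times> V) \<inter> U \<times> V = {}"
      proof
        assume b: "b \<noteq> id"
        have "b \<in> snd ` \<Gamma>" using ab by force
        then have "b ` V \<inter> V = {}" using bspec[OF V(3)] b by blast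
        then show ?thesis using ab by (auto simp: map_prod_image)
      next
        assume a: "a \<noteq> id"
        show ?thesis
        proof (cases "b = id")
          case True
          then have "a \<in> slice2 \<Gamma> id" using ab unfolding slice2_def by simp
          then have "a ` U \<inter> U = {}" using bspec[OF U(3)] a by blast
          then show ?thesis using ab by (auto simp: map_prod_image)
        next
          case False
          have "b \<in> snd ` \<Gamma>" using ab by force
          then have "b ` V \<inter> V = {}" using bspec[OF V(3)] False by blast
          then show ?thesis using ab by (auto simp: map_prod_image)
        qed
      qed
    qed
  qed
  have B: "PD2 (prod_action \<Gamma>)"
    unfolding PD2_def
  proof (intro allI impI)
    fix x y :: "'a \<times> 'b"
    assume nrel: "\<forall>\<gamma>\<in>prod_action \<Gamma>. \<gamma> x \<noteq> y"
    obtain p q where x: "x = (p, q)" by (rule prod.exhaust)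
    obtain p' q' where y: "y = (p', q')" by (rule prod.exhaust)
    show "\<exists>U V. open U \<and> x \<in> U \<and> open V \<and> y \<in> V \<and> (\<forall>\<gamma>\<in>prod_action \<Gamma>. \<gamma> ` U \<inter> V = {})"
    proof (cases "\<exists>\<sigma>\<in>snd ` \<Gamma>. \<sigma> q = q'")
      case False
      then have nr: "\<forall>\<gamma>\<in>snd ` \<Gamma>. \<gamma> q \<noteq> q'" by blast
      have "\<exists>V V'. open V \<and> q \<in> V \<and> open V' \<and> q' \<in> V' \<and> (\<forall>\<gamma>\<in>snd ` \<Gamma>. \<gamma> ` V \<inter> V' = {})"
        using pd2 nr unfolding PD2_def by (rule allE2)
      then obtain V V' where VV: "open V" "q \<in> V" "open V'" "q' \<in> V'"
          "\<forall>\<gamma>\<in>snd ` \<Gamma>. \<gamma> ` V \<inter> V' = {}"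
        by blast
      show ?thesis
      proof (intro exI conjI ballI)
        show "open (UNIV \<times> V)" "open (UNIV \<times> V')" using VV by (simp_all add: open_Times)
        show "x \<in> UNIV \<times> V" "y \<in> UNIV \<times> V'" using VV x y by auto
        fix g assume "g \<in> prod_action \<Gamma>"
        then obtain a b where ab: "(a, b) \<in> \<Gamma>" "g = map_prod a b"
          unfolding prod_action_def by auto
        have "b \<in> snd ` \<Gamma>" using ab by force
        then have "b ` V \<inter> V' = {}" using bspec[OF VV(5)] by blast
        then show "g ` (UNIV \<times> V) \<inter> UNIV \<times> V' = {}" using ab by (auto simp: map_prod_image)
      qed
    next
      case True
      then obtain s0 where s0: "s0 \<in> snd ` \<Gamma>" "s0 q = q'" by blast
      then obtain a0 where a0: "(a0, s0) \<in> \<Gamma>" by force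
      obtain c where c: "c \<in> \<Gamma>" "a0 \<circ> fst c = id" "fst c \<circ> a0 = id"
          "s0 \<circ> snd c = id" "snd c \<circ> s0 = id"
        using bspec[OF G4 a0] by auto
      have s0h: "self_homeo s0" using bspec[OF G1 a0] by simp
      have "\<forall>\<gamma>\<in>slice2 \<Gamma> s0. \<gamma> p \<noteq> p'"
      proof
        fix \<gamma> assume "\<gamma> \<in> slice2 \<Gamma> s0"
        then have "(\<gamma>, s0) \<in> \<Gamma>" unfolding slice2_def by simp
        then have "map_prod \<gamma> s0 \<in> prod_action \<Gamma>" unfolding prod_action_def by force
        then have "map_prod \<gamma> s0 x \<noteq> y" using bspec[OF nrel] by blast
        then show "\<gamma> p \<noteq> p'" using x y s0 by auto
      qed
      with bspec[OF p2 s0(1)] have "\<exists>U U'. open U \<and> p \<in> U \<and> open U' \<and> p' \<in> U' \<and> (\<forall>\<gamma>\<in>slice2 \<Gamma> s0. \<gamma> ` U \<inter> U' = {})"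
        unfolding PD2_def by (rule allE2)
      then obtain U U' where UU: "open U" "p \<in> U" "open U'" "p' \<in> U'"
          "\<forall>\<gamma>\<in>slice2 \<Gamma> s0. \<gamma> ` U \<inter> U' = {}"
        by blast
      obtain W where W: "open W" "q \<in> W" "\<forall>\<gamma>\<in>snd ` \<Gamma>. \<gamma> \<noteq> id \<longrightarrow> \<gamma> ` W \<inter> W = {}"
        using pd1 unfolding PD1_def by blast
      have key: "b ` W \<inter> s0 ` W = {}" if b: "b \<in> snd ` \<Gamma>" "b \<noteq> s0" for b
      proof (rule ccontr)
        assume "b ` W \<inter> s0 ` W \<noteq> {}"
        then obtain w1 w2 where w: "w1 \<in> W" "w2 \<in> W" "b w1 = s0 w2" by auto
        obtain a1 where a1: "(a1, b) \<in> \<Gamma>" using b by force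
        have "(fst c \<circ> a1, snd c \<circ> b) \<in> \<Gamma>" using bspec[OF bspec[OF G3 c(1)] a1] by simp
        then have m: "snd c \<circ> b \<in> snd ` \<Gamma>" by force
        have "(snd c \<circ> b) w1 = w2" using w c(5) by (simp add: pointfree_idE)
        then have ne: "(snd c \<circ> b) ` W \<inter> W \<noteq> {}" using w by blast
        have "snd c \<circ> b = id" using bspec[OF W(3) m] ne by blast
        then have "s0 \<circ> (snd c \<circ> b) = s0" by simp
        then have "b = s0" using c(4) by (metis comp_assoc id_comp)
        then show False using b by simp
      qed
      show ?thesis
      proof (intro exI conjI ballI)
        show "open (U \<times> W)" "open (U' \<times> s0 ` W)"
          using UU W self_homeo_open[OF s0h W(1)] by (simp_all add: open_Times)
        show "x \<in> U \<times> W" "y \<in> U' \<times> s0 ` W" using UU W x y s0 by auto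
        fix g assume "g \<in> prod_action \<Gamma>"
        then obtain a b where ab: "(a, b) \<in> \<Gamma>" "g = map_prod a b"
          unfolding prod_action_def by auto
        show "g ` (U \<times> W) \<inter> U' \<times> s0 ` W = {}"
        proof (cases "b = s0")
          case True
          then have "a \<in> slice2 \<Gamma> s0" using ab unfolding slice2_def by simp
          then have "a ` U \<inter> U' = {}" using bspec[OF UU(5)] by blast
          then show ?thesis using ab by (auto simp: map_prod_image)
        next
          case False
          have "b \<in> snd ` \<Gamma>" using ab by force
          then have "b ` W \<inter> s0 ` W = {}" using key False by blast
          then show ?thesis using ab by (auto simp: map_prod_image)
        qed
      qed
    qed
  qed
  show ?thesis using A B unfolding properly_discontinuous_def by simp
qed

lemma case2:
  fixes \<Gamma> :: "(('a::topological_space \<Rightarrow> 'a) \<times> ('b::topological_space \<Rightarrow> 'b)) set"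
  assumes grp: "product_homeo_group \<Gamma>"
    and pd: "properly_discontinuous (fst ` \<Gamma>)"
    and p1: "PD1 (slice1 \<Gamma> id)"
    and p2: "\<forall>\<sigma>\<in>fst ` \<Gamma>. PD2 (slice1 \<Gamma> \<sigma>)"
  shows "properly_discontinuous (prod_action \<Gamma>)"
proof -
  have G1: "\<forall>\<gamma>\<in>\<Gamma>. self_homeo (fst \<gamma>) \<and> self_homeo (snd \<gamma>)"
    and G3: "\<forall>a\<in>\<Gamma>. \<forall>b\<in>\<Gamma>. (fst a \<circ> fst b, snd a \<circ> snd b) \<in> \<Gamma>"
    and G4: "\<forall>a\<in>\<Gamma>. \<exists>b\<in>\<Gamma>. fst a \<circ> fst b = id \<and> fst b \<circ> fst a = id \<and>
                       snd a \<circ> snd b = id \<and> snd b \<circ> snd a = id"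
    using grp unfolding product_homeo_group_def by blast+
  have pd1: "PD1 (fst ` \<Gamma>)" and pd2: "PD2 (fst ` \<Gamma>)"
    using pd unfolding properly_discontinuous_def by auto
  have A: "PD1 (prod_action \<Gamma>)"
    unfolding PD1_def
  proof
    fix x :: "'a \<times> 'b"
    obtain p q where x: "x = (q, p)" by (rule prod.exhaust)
    obtain U where U: "open U" "p \<in> U" "\<forall>\<gamma>\<in>slice1 \<Gamma> id. \<gamma> \<noteq> id \<longrightarrow> \<gamma> ` U \<inter> U = {}"
      using p1 unfolding PD1_def by blast
    obtain V where V: "open V" "q \<in> V" "\<forall>\<gamma>\<in>fst ` \<Gamma>. \<gamma> \<noteq> id \<longrightarrow> \<gamma> ` V \<inter> V = {}"
      using pd1 unfolding PD1_def by blast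
    show "\<exists>W. open W \<and> x \<in> W \<and> (\<forall>\<gamma>\<in>prod_action \<Gamma>. \<gamma> \<noteq> id \<longrightarrow> \<gamma> ` W \<inter> W = {})"
    proof (intro exI conjI ballI impI)
      show "open (V \<times> U)" using U V by (simp add: open_Times)
      show "x \<in> V \<times> U" using U V x by simp
      fix g assume g: "g \<in> prod_action \<Gamma>" "g \<noteq> id"
      then obtain a b where ab: "(b, a) \<in> \<Gamma>" "g = map_prod b a"
        unfolding prod_action_def by auto
      have "a \<noteq> id \<or> b \<noteq> id" using g ab map_prod_neq_id by blast
      then show "g ` (V \<times> U) \<inter> V \<times> U = {}"
      proof
        assume b: "b \<noteq> id"
        have "b \<in> fst ` \<Gamma>" using ab by force
        then have "b ` V \<inter> V = {}" using bspec[OF V(3)] b by blast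
        then show ?thesis using ab by (auto simp: map_prod_image)
      next
        assume a: "a \<noteq> id"
        show ?thesis
        proof (cases "b = id")
          case True
          then have "a \<in> slice1 \<Gamma> id" using ab unfolding slice1_def by simp
          then have "a ` U \<inter> U = {}" using bspec[OF U(3)] a by blast
          then show ?thesis using ab by (auto simp: map_prod_image)
        next
          case False
          have "b \<in> fst ` \<Gamma>" using ab by force
          then have "b ` V \<inter> V = {}" using bspec[OF V(3)] False by blast
          then show ?thesis using ab by (auto simp: map_prod_image)
        qed
      qed
    qed
  qed
  have B: "PD2 (prod_action \<Gamma>)"
    unfolding PD2_def
  proof (intro allI impI)
    fix x y :: "'a \<times> 'b"
    assume nrel: "\<forall>\<gamma>\<in>prod_action \<Gamma>. \<gamma> x \<noteq> y"
    obtain p q where x: "x = (q, p)" by (rule prod.exhaust)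
    obtain p' q' where y: "y = (q', p')" by (rule prod.exhaust)
    show "\<exists>U V. open U \<and> x \<in> U \<and> open V \<and> y \<in> V \<and> (\<forall>\<gamma>\<in>prod_action \<Gamma>. \<gamma> ` U \<inter> V = {})"
    proof (cases "\<exists>\<sigma>\<in>fst ` \<Gamma>. \<sigma> q = q'")
      case False
      then have nr: "\<forall>\<gamma>\<in>fst ` \<Gamma>. \<gamma> q \<noteq> q'" by blast
      have "\<exists>V V'. open V \<and> q \<in> V \<and> open V' \<and> q' \<in> V' \<and> (\<forall>\<gamma>\<in>fst ` \<Gamma>. \<gamma> ` V \<inter> V' = {})"
        using pd2 nr unfolding PD2_def by (rule allE2)
      then obtain V V' where VV: "open V" "q \<in> V" "open V'" "q' \<in> V'"
          "\<forall>\<gamma>\<in>fst ` \<Gamma>. \<gamma> ` V \<inter> V' = {}"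
        by blast
      show ?thesis
      proof (intro exI conjI ballI)
        show "open (V \<times> UNIV)" "open (V' \<times> UNIV)" using VV by (simp_all add: open_Times)
        show "x \<in> V \<times> UNIV" "y \<in> V' \<times> UNIV" using VV x y by auto
        fix g assume "g \<in> prod_action \<Gamma>"
        then obtain a b where ab: "(b, a) \<in> \<Gamma>" "g = map_prod b a"
          unfolding prod_action_def by auto
        have "b \<in> fst ` \<Gamma>" using ab by force
        then have "b ` V \<inter> V' = {}" using bspec[OF VV(5)] by blast
        then show "g ` (V \<times> UNIV) \<inter> V' \<times> UNIV = {}" using ab by (auto simp: map_prod_image)
      qed
    next
      case True
      then obtain s0 where s0: "s0 \<in> fst ` \<Gamma>" "s0 q = q'" by blast
      then obtain a0 where a0: "(s0, a0) \<in> \<Gamma>" by force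
      obtain c where c: "c \<in> \<Gamma>" "a0 \<circ> snd c = id" "snd c \<circ> a0 = id"
          "s0 \<circ> fst c = id" "fst c \<circ> s0 = id"
        using bspec[OF G4 a0] by auto
      have s0h: "self_homeo s0" using bspec[OF G1 a0] by simp
      have "\<forall>\<gamma>\<in>slice1 \<Gamma> s0. \<gamma> p \<noteq> p'"
      proof
        fix \<gamma> assume "\<gamma> \<in> slice1 \<Gamma> s0"
        then have "(s0, \<gamma>) \<in> \<Gamma>" unfolding slice1_def by simp
        then have "map_prod s0 \<gamma> \<in> prod_action \<Gamma>" unfolding prod_action_def by force
        then have "map_prod s0 \<gamma> x \<noteq> y" using bspec[OF nrel] by blast
        then show "\<gamma> p \<noteq> p'" using x y s0 by auto
      qed
      with bspec[OF p2 s0(1)] have "\<exists>U U'. open U \<and> p \<in> U \<and> open U' \<and> p' \<in> U' \<and> (\<forall>\<gamma>\<in>slice1 \<Gamma> s0. \<gamma> ` U \<inter> U' = {})"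
        unfolding PD2_def by (rule allE2)
      then obtain U U' where UU: "open U" "p \<in> U" "open U'" "p' \<in> U'"
          "\<forall>\<gamma>\<in>slice1 \<Gamma> s0. \<gamma> ` U \<inter> U' = {}"
        by blast
      obtain W where W: "open W" "q \<in> W" "\<forall>\<gamma>\<in>fst ` \<Gamma>. \<gamma> \<noteq> id \<longrightarrow> \<gamma> ` W \<inter> W = {}"
        using pd1 unfolding PD1_def by blast
      have key: "b ` W \<inter> s0 ` W = {}" if b: "b \<in> fst ` \<Gamma>" "b \<noteq> s0" for b
      proof (rule ccontr)
        assume "b ` W \<inter> s0 ` W \<noteq> {}"
        then obtain w1 w2 where w: "w1 \<in> W" "w2 \<in> W" "b w1 = s0 w2" by auto
        obtain a1 where a1: "(b, a1) \<in> \<Gamma>" using b by force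
        have "(fst c \<circ> b, snd c \<circ> a1) \<in> \<Gamma>" using bspec[OF bspec[OF G3 c(1)] a1] by simp
        then have m: "fst c \<circ> b \<in> fst ` \<Gamma>" by force
        have "(fst c \<circ> b) w1 = w2" using w c(5) by (simp add: pointfree_idE)
        then have ne: "(fst c \<circ> b) ` W \<inter> W \<noteq> {}" using w by blast
        have "fst c \<circ> b = id" using bspec[OF W(3) m] ne by blast
        then have "s0 \<circ> (fst c \<circ> b) = s0" by simp
        then have "b = s0" using c(4) by (metis comp_assoc id_comp)
        then show False using b by simp
      qed
      show ?thesis
      proof (intro exI conjI ballI)
        show "open (W \<times> U)" "open (s0 ` W \<times> U')"
          using UU W self_homeo_open[OF s0h W(1)] by (simp_all add: open_Times)
        show "x \<in> W \<times> U" "y \<in> s0 ` W \<times> U'" using UU W x y s0 by auto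
        fix g assume "g \<in> prod_action \<Gamma>"
        then obtain a b where ab: "(b, a) \<in> \<Gamma>" "g = map_prod b a"
          unfolding prod_action_def by auto
        show "g ` (W \<times> U) \<inter> s0 ` W \<times> U' = {}"
        proof (cases "b = s0")
          case True
          then have "a \<in> slice1 \<Gamma> s0" using ab unfolding slice1_def by simp
          then have "a ` U \<inter> U' = {}" using bspec[OF UU(5)] by blast
          then show ?thesis using ab by (auto simp: map_prod_image)
        next
          case False
          have "b \<in> fst ` \<Gamma>" using ab by force
          then have "b ` W \<inter> s0 ` W = {}" using key False by blast
          then show ?thesis using ab by (auto simp: map_prod_image)
        qed
      qed
    qed
  qed
  show ?thesis using A B unfolding properly_discontinuous_def by simp
qed

theorem lemma2:
  fixes \<Gamma> :: "(('m1::{t2_space, second_countable_topology} \<Rightarrow> 'm1) \<times>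
                   ('m2::{t2_space, second_countable_topology} \<Rightarrow> 'm2)) set"
  assumes "locally_euclidean TYPE('m1) TYPE('n1::finite)"
      and "locally_euclidean TYPE('m2) TYPE('n2::finite)"
      and "connected (UNIV :: 'm1 set)"
      and "connected (UNIV :: 'm2 set)"
      and "product_homeo_group \<Gamma>"
      and "of_quotient_type \<Gamma>"
  shows "properly_discontinuous (prod_action \<Gamma>)"
  using assms(5,6) case1 case2 unfolding of_quotient_type_def by blast

end
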